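(* Let $T$ and $S$ be maps (each with finitely many points of period dividing $n$ for every $n\ge1$), and let $T\times S$ be their Cartesian product. If any two of the sequences $\mathcal O_T$, $\mathcal O_S$, $\mathcal O_{T\times S}$ are multiplicative, then so is the third.
   Context: For a map $T:X\to X$, $\mathcal O_T(n)$ denotes the number of closed orbits of length $n$ under $T$ (sets $\{x,Tx,\dots,T^{n-1}x\}$ with $T^nx=x$ of cardinality exactly $n$), and $\mathcal F_T(n)=|\{x:T^nx=x\}|$. A sequence $f:\mathbb N\to\mathbb Z$ is multiplicative if $f(1)=1$ and $f(mn)=f(m)f(n)$ whenever $\gcd(m,n)=1$. $T\times S$ denotes the map $(x,y)\mapsto(Tx,Sy)$. *)

theory Defs
  imports Main
begin

definition closed_orbits :: "('a \<Rightarrow> 'a) \<Rightarrow> nat \<Rightarrow> 'a set set" where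
  "closed_orbits T n = {A. \<exists>x. (T ^^ n) x = x \<and> A = {(T ^^ i) x | i. i < n} \<and> card A = n}"

definition orbit_count :: "('a \<Rightarrow> 'a) \<Rightarrow> nat \<Rightarrow> int" where
  "orbit_count T n = int (card (closed_orbits T n))"

definition fixed_count :: "('a \<Rightarrow> 'a) \<Rightarrow> nat \<Rightarrow> int" where
  "fixed_count T n = int (card {x. (T ^^ n) x = x})"

definition multiplicative_seq :: "(nat \<Rightarrow> int) \<Rightarrow> bool" where
  "multiplicative_seq f \<longleftrightarrow> f 1 = 1 \<and>
     (\<forall>m n. 0 < m \<longrightarrow> 0 < n \<longrightarrow> coprime m n \<longrightarrow> f (m * n) = f m * f n)"

end

theory Submission
  imports Defs
begin

definition divs :: "nat \<Rightarrow> nat set" where "divs n = {d. d dvd n}"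

lemma finite_divs: "0 < n \<Longrightarrow> finite (divs n)"
  unfolding divs_def by (simp add: finite_divisors_nat)

lemma divs_1: "divs 1 = {1}" unfolding divs_def by auto

lemma l1: "a dvd m \<Longrightarrow> b dvd k \<Longrightarrow> coprime m k \<Longrightarrow> gcd (a*b) m = (a::nat)"
  by (metis coprime_mult_right_iff dvd_mult_div_cancel
    gcd_mult_left_right_cancel gcd_nat.order_iff)

lemma l2: assumes "a1 dvd m" "b1 dvd m" "a2 dvd k" "b2 dvd k" "coprime m k"
  shows "lcm (a1*a2) (b1*b2) = lcm a1 b1 * lcm a2 (b2::nat)"
proof -
  have c1: "coprime a1 a2" using assms coprime_divisors by blast
  have c2: "coprime b1 b2" using assms coprime_divisors by blast
  have c3: "coprime (lcm a1 b1) (lcm a2 b2)" using assms coprime_divisors by (meson lcm_least)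
  have "a1*a2 = lcm a1 a2" using lcm_coprime[OF c1] by simp
  moreover have "b1*b2 = lcm b1 b2" using lcm_coprime[OF c2] by simp
  moreover have "lcm a1 b1 * lcm a2 b2 = lcm (lcm a1 b1) (lcm a2 b2)" using lcm_coprime[OF c3] by simp
  ultimately show ?thesis by (simp add: ac_simps)
qed

lemma prod_eq_le: assumes "(x::nat) \<le> m" "y \<le> k" "x * y = m * k" "0 < m" "0 < k"
  shows "x = m \<and> y = k"
proof (rule ccontr)
  assume "\<not> (x = m \<and> y = k)"
  then have "x < m \<or> y < k" using assms by auto
  then have "x * y < m * k" using assms
    by (metis mult_le_mono le_neq_implies_less mult_le_cancel1 mult_le_cancel2 not_less nat_0_less_mult_iff
       less_le_trans mult_less_le_imp_less mult_le_less_imp_less)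
  then show False using assms by simp
qed

lemma lcm_split: assumes "a1 dvd m" "b1 dvd m" "a2 dvd k" "b2 dvd k" "coprime m k" "0 < m" "0 < k"
  shows "lcm (a1*a2) (b1*b2) = m * k \<longleftrightarrow> lcm a1 b1 = m \<and> lcm a2 (b2::nat) = k"
proof -
  have "lcm a1 b1 \<le> m" using assms by (simp add: dvd_imp_le)
  moreover have "lcm a2 b2 \<le> k" using assms by (simp add: dvd_imp_le)
  ultimately show ?thesis using l2[OF assms(1-5)] prod_eq_le assms by metis
qed

lemma div_split:
  assumes "0 < m" "0 < k" "coprime m k"
  shows "sum F (divs (m*k)) = (\<Sum>a\<in>divs m. \<Sum>b\<in>divs k. F (a*b))"
proof -
  have inj: "inj_on (\<lambda>(a,b). a*b) (divs m \<times> divs k)"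
  proof (rule inj_onI, clarsimp simp: divs_def)
    fix a b a' b' assume h: "a dvd m" "b dvd k" "a' dvd m" "b' dvd k" "a * b = a' * b'"
    have "a = a'" using l1[of a m b k] l1[of a' m b' k] h assms by metis
    moreover have "b = b'" using l1[of b k a m] l1[of b' k a' m] h assms
      by (metis coprime_commute mult.commute)
    ultimately show "a = a' \<and> b = b'" by simp
  qed
  have img: "(\<lambda>(a,b). a*b) ` (divs m \<times> divs k) = divs (m*k)"
  proof
    show "(\<lambda>(a,b). a*b) ` (divs m \<times> divs k) \<subseteq> divs (m*k)"
      by (auto simp: divs_def mult_dvd_mono)
    show "divs (m*k) \<subseteq> (\<lambda>(a,b). a*b) ` (divs m \<times> divs k)"
    proof
      fix d assume "d \<in> divs (m*k)"
      then obtain a b where "d = a*b" "a dvd m" "b dvd k" using division_decomp unfolding divs_def by blast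
      then show "d \<in> (\<lambda>(a,b). a*b) ` (divs m \<times> divs k)" unfolding divs_def by force
    qed
  qed
  have "sum F (divs (m*k)) = sum (F \<circ> (\<lambda>(a,b). a*b)) (divs m \<times> divs k)"
    using sum.reindex[OF inj, of F] img by simp
  also have "\<dots> = (\<Sum>(a,b)\<in>divs m \<times> divs k. F (a*b))"
    by (rule sum.cong) auto
  also have "\<dots> = (\<Sum>a\<in>divs m. \<Sum>b\<in>divs k. F (a*b))"
    by (rule sum.cartesian_product[symmetric])
  finally show ?thesis .
qed

definition H :: "(nat \<Rightarrow> int) \<Rightarrow> (nat \<Rightarrow> int) \<Rightarrow> nat \<Rightarrow> int" where
  "H f g n = (\<Sum>a\<in>divs n. \<Sum>b\<in>divs n. if lcm a b = n then f a * g b else 0)"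

lemma H_comm: "H f g n = H g f n"
  unfolding H_def by (subst sum.swap) (intro sum.cong refl, simp add: lcm.commute mult.commute)

lemma H_1: "H f g 1 = f 1 * g 1"
  unfolding H_def divs_1 by simp

lemma H_split:
  assumes "0 < m" "0 < k" "coprime m k"
  shows "H f g (m*k) = (\<Sum>a1\<in>divs m. \<Sum>a2\<in>divs k. \<Sum>b1\<in>divs m. \<Sum>b2\<in>divs k.
     if lcm a1 b1 = m \<and> lcm a2 b2 = k then f (a1*a2) * g (b1*b2) else 0)"
proof -
  have "H f g (m*k) = (\<Sum>a1\<in>divs m. \<Sum>a2\<in>divs k. \<Sum>b\<in>divs (m*k).
     if lcm (a1*a2) b = m*k then f (a1*a2) * g b else 0)"
    unfolding H_def by (rule div_split[OF assms])
  also have "\<dots> = (\<Sum>a1\<in>divs m. \<Sum>a2\<in>divs k. \<Sum>b1\<in>divs m. \<Sum>b2\<in>divs k.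
     if lcm (a1*a2) (b1*b2) = m*k then f (a1*a2) * g (b1*b2) else 0)"
    by (intro sum.cong refl div_split[OF assms])
  also have "\<dots> = (\<Sum>a1\<in>divs m. \<Sum>a2\<in>divs k. \<Sum>b1\<in>divs m. \<Sum>b2\<in>divs k.
     if lcm a1 b1 = m \<and> lcm a2 b2 = k then f (a1*a2) * g (b1*b2) else 0)"
    apply (intro sum.cong refl)
    using lcm_split assms unfolding divs_def by simp
  finally show ?thesis .
qed

lemma H_prod:
  "H f g m * H f g k = (\<Sum>a1\<in>divs m. \<Sum>a2\<in>divs k. \<Sum>b1\<in>divs m. \<Sum>b2\<in>divs k.
     if lcm a1 b1 = m \<and> lcm a2 b2 = k then f a1 * f a2 * (g b1 * g b2) else 0)"
proof -
  have "H f g m * H f g k = (\<Sum>a1\<in>divs m. \<Sum>a2\<in>divs k. \<Sum>b1\<in>divs m. \<Sum>b2\<in>divs k.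
     (if lcm a1 b1 = m then f a1 * g b1 else 0) * (if lcm a2 b2 = k then f a2 * g b2 else 0))"
    unfolding H_def by (simp add: sum_product)
  also have "\<dots> = (\<Sum>a1\<in>divs m. \<Sum>a2\<in>divs k. \<Sum>b1\<in>divs m. \<Sum>b2\<in>divs k.
     if lcm a1 b1 = m \<and> lcm a2 b2 = k then f a1 * f a2 * (g b1 * g b2) else 0)"
    by (intro sum.cong refl) (simp add: ac_simps)
  finally show ?thesis .
qed
lemma divs_coprime: "a1 \<in> divs m \<Longrightarrow> a2 \<in> divs k \<Longrightarrow> coprime m k \<Longrightarrow> coprime a1 a2"
  unfolding divs_def using coprime_divisors by blast

lemma H_mult:
  assumes f: "multiplicative_seq f" and g: "multiplicative_seq g"
  shows "multiplicative_seq (H f g)"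
  unfolding multiplicative_seq_def
proof (intro conjI allI impI)
  show "H f g 1 = 1" using H_1[of f g] f g unfolding multiplicative_seq_def by simp
  fix m k :: nat assume mk: "0 < m" "0 < k" "coprime m k"
  have "H f g (m*k) = (\<Sum>a1\<in>divs m. \<Sum>a2\<in>divs k. \<Sum>b1\<in>divs m. \<Sum>b2\<in>divs k.
     if lcm a1 b1 = m \<and> lcm a2 b2 = k then f (a1*a2) * g (b1*b2) else 0)"
    by (rule H_split[OF mk])
  also have "\<dots> = (\<Sum>a1\<in>divs m. \<Sum>a2\<in>divs k. \<Sum>b1\<in>divs m. \<Sum>b2\<in>divs k.
     if lcm a1 b1 = m \<and> lcm a2 b2 = k then f a1 * f a2 * (g b1 * g b2) else 0)"
  proof (intro sum.cong refl)
    fix a1 a2 b1 b2 assume h: "a1 \<in> divs m" "a2 \<in> divs k" "b1 \<in> divs m" "b2 \<in> divs k"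
    have "0 < a1" "0 < a2" "0 < b1" "0 < b2" using h mk unfolding divs_def by (auto intro: Nat.gr0I)
    moreover have "coprime a1 a2" "coprime b1 b2" using h mk divs_coprime by blast+
    ultimately show "(if lcm a1 b1 = m \<and> lcm a2 b2 = k then f (a1*a2) * g (b1*b2) else 0) =
      (if lcm a1 b1 = m \<and> lcm a2 b2 = k then f a1 * f a2 * (g b1 * g b2) else 0)"
      using f g unfolding multiplicative_seq_def by simp
  qed
  also have "\<dots> = H f g m * H f g k" by (rule H_prod[symmetric])
  finally show "H f g (m*k) = H f g m * H f g k" .
qed

lemma H_cancel:
  assumes f: "multiplicative_seq f" and fpos: "\<And>n. 0 \<le> f n" and h: "multiplicative_seq (H f g)"
  shows "multiplicative_seq g"
proof -
  have f1: "f 1 = 1" and fm: "\<And>m n. 0 < m \<Longrightarrow> 0 < n \<Longrightarrow> coprime m n \<Longrightarrow> f (m*n) = f m * f n"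
    using f unfolding multiplicative_seq_def by auto
  have g1: "g 1 = 1" using H_1[of f g] h f1 unfolding multiplicative_seq_def by simp
  have hm: "\<And>m n. 0 < m \<Longrightarrow> 0 < n \<Longrightarrow> coprime m n \<Longrightarrow> H f g (m*n) = H f g m * H f g n"
    using h unfolding multiplicative_seq_def by auto
  have sumpos: "0 < sum f (divs m)" if "0 < m" for m
  proof -
    have "f 1 \<le> sum f (divs m)"
      by (rule member_le_sum) (use that fpos in \<open>auto simp: divs_def finite_divs\<close>)
    then show ?thesis using f1 by simp
  qed
  have main: "\<forall>m k. m * k = n \<longrightarrow> 0 < m \<longrightarrow> 0 < k \<longrightarrow> coprime m k \<longrightarrow> g (m*k) = g m * g k" for n
  proof (induction n rule: less_induct)
    case (less n)
    show ?case
    proof (intro allI impI)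
      fix m k assume e: "m * k = n" and mk: "0 < m" "0 < k" "coprime m k"
      define D where "D = g (m*k) - g m * g k"
      have IH: "g (b1*b2) = g b1 * g b2" if "b1 \<in> divs m" "b2 \<in> divs k" "\<not> (b1 = m \<and> b2 = k)" for b1 b2
      proof -
        have p: "0 < b1" "0 < b2" using that mk unfolding divs_def by (auto intro: Nat.gr0I)
        have "b1 \<le> m" "b2 \<le> k" using that mk unfolding divs_def by (auto simp: dvd_imp_le)
        then have "b1 * b2 < n" using that(3) prod_eq_le[of b1 m b2 k] mk e
          by (metis le_neq_implies_less mult_le_mono)
        then show ?thesis using less.IH p divs_coprime[OF that(1,2) mk(3)] by blast
      qed
      have "0 = H f g (m*k) - H f g m * H f g k" using hm mk by simp
      also have "\<dots> = (\<Sum>a1\<in>divs m. \<Sum>a2\<in>divs k. \<Sum>b1\<in>divs m. \<Sum>b2\<in>divs k.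
         (if lcm a1 b1 = m \<and> lcm a2 b2 = k then f (a1*a2) * g (b1*b2) else 0) -
         (if lcm a1 b1 = m \<and> lcm a2 b2 = k then f a1 * f a2 * (g b1 * g b2) else 0))"
        unfolding H_split[OF mk] H_prod by (simp add: sum_subtractf)
      also have "\<dots> = (\<Sum>a1\<in>divs m. \<Sum>a2\<in>divs k. \<Sum>b1\<in>divs m. \<Sum>b2\<in>divs k.
         if b1 = m \<and> b2 = k then f a1 * f a2 * D else 0)"
      proof (intro sum.cong refl)
        fix a1 a2 b1 b2 assume h: "a1 \<in> divs m" "a2 \<in> divs k" "b1 \<in> divs m" "b2 \<in> divs k"
        have "coprime a1 a2" using h mk divs_coprime by blast
        moreover have "0 < a1" "0 < a2" using h mk unfolding divs_def by (auto intro: Nat.gr0I)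
        moreover have "lcm a1 m = m" "lcm a2 k = k" using h unfolding divs_def by (auto simp: lcm_proj2_if_dvd)
        ultimately show "(if lcm a1 b1 = m \<and> lcm a2 b2 = k then f (a1*a2) * g (b1*b2) else 0) -
         (if lcm a1 b1 = m \<and> lcm a2 b2 = k then f a1 * f a2 * (g b1 * g b2) else 0) =
         (if b1 = m \<and> b2 = k then f a1 * f a2 * D else 0)"
          using IH[OF h(3,4)] fm by (auto simp: D_def algebra_simps)
      qed
      also have "\<dots> = (\<Sum>a1\<in>divs m. \<Sum>a2\<in>divs k. f a1 * f a2 * D)"
      proof (intro sum.cong refl)
        fix a1 a2
        have "(\<Sum>b1\<in>divs m. \<Sum>b2\<in>divs k. if b1 = m \<and> b2 = k then f a1 * f a2 * D else 0)
          = (\<Sum>b1\<in>divs m. if b1 = m then (\<Sum>b2\<in>divs k. if b2 = k then f a1 * f a2 * D else 0) else 0)"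
          by (intro sum.cong refl) auto
        also have "\<dots> = f a1 * f a2 * D"
          using mk by (simp add: finite_divs divs_def)
        finally show "(\<Sum>b1\<in>divs m. \<Sum>b2\<in>divs k. if b1 = m \<and> b2 = k then f a1 * f a2 * D else 0) = f a1 * f a2 * D" .
      qed
      also have "\<dots> = sum f (divs m) * sum f (divs k) * D"
        by (simp add: sum_distrib_right sum_distrib_left mult.assoc sum.swap[of _ "divs k"])
      finally have "sum f (divs m) * sum f (divs k) * D = 0" by simp
      then have "D = 0" using sumpos[OF mk(1)] sumpos[OF mk(2)] by simp
      then show "g (m*k) = g m * g k" unfolding D_def by simp
    qed
  qed
  show ?thesis unfolding multiplicative_seq_def using g1 main by blast
qed

definition Pset :: "('a \<Rightarrow> 'a) \<Rightarrow> nat \<Rightarrow> 'a set" where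
  "Pset T n = {x. (T^^n) x = x \<and> (\<forall>k. 0 < k \<longrightarrow> k < n \<longrightarrow> (T^^k) x \<noteq> x)}"

lemma funpow_mult_fix: fixes T :: "'a \<Rightarrow> 'a" shows "(T^^k) x = x \<Longrightarrow> (T^^(k*q)) x = x"
proof (induction q)
  case 0 then show ?case by simp
next
  case (Suc q)
  have "(T^^(k*Suc q)) x = (T^^k) ((T^^(k*q)) x)" by (simp add: funpow_add)
  then show ?case using Suc by simp
qed

lemma funpow_mod: fixes T :: "'a \<Rightarrow> 'a" shows "(T^^k) x = x \<Longrightarrow> (T^^i) x = (T^^(i mod k)) x"
proof -
  assume h: "(T^^k) x = x"
  have "(T^^i) x = (T^^(i mod k + k*(i div k))) x" by simp
  also have "\<dots> = (T^^(i mod k)) ((T^^(k*(i div k))) x)" by (simp only: funpow_add o_apply)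
  finally have "(T^^i) x = (T^^(i mod k)) ((T^^(k*(i div k))) x)" .
  then show ?thesis using funpow_mult_fix[OF h] by simp
qed

lemma per_dvd: assumes "0 < p" "x \<in> Pset T p" shows "(T^^k) x = x \<longleftrightarrow> p dvd k"
proof
  have px: "(T^^p) x = x" using assms by (simp add: Pset_def)
  assume "(T^^k) x = x"
  then have "(T^^(k mod p)) x = x" using funpow_mod[OF px, of k] by simp
  moreover have "k mod p < p" using assms by simp
  ultimately have "k mod p = 0" using assms(2) unfolding Pset_def by blast
  then show "p dvd k" by auto
next
  assume "p dvd k"
  then obtain q where "k = p*q" by auto
  then show "(T^^k) x = x" using funpow_mult_fix[where T=T and k=p and x=x and q=q] assms by (simp add: Pset_def)
qed

lemma Pset_unique: "0 < p \<Longrightarrow> 0 < q \<Longrightarrow> x \<in> Pset T p \<Longrightarrow> x \<in> Pset T q \<Longrightarrow> p = q"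
proof -
  assume h: "0 < p" "0 < q" "x \<in> Pset T p" "x \<in> Pset T q"
  have "(T^^q) x = x" "(T^^p) x = x" using h by (simp_all add: Pset_def)
  then have "p dvd q" "q dvd p" using per_dvd[OF h(1,3)] per_dvd[OF h(2,4)] by blast+
  then show "p = q" by (rule dvd_antisym)
qed

lemma exists_period: assumes "0 < n" "(T^^n) x = x"
  shows "\<exists>p. 0 < p \<and> p dvd n \<and> x \<in> Pset T p"
proof -
  define p where "p = (LEAST p. 0 < p \<and> (T^^p) x = x)"
  have p1: "0 < p \<and> (T^^p) x = x" unfolding p_def by (rule LeastI[of _ n]) (use assms in auto)
  have p2: "\<not> (0 < k \<and> (T^^k) x = x)" if "k < p" for k using not_less_Least that p_def by blast
  have "x \<in> Pset T p" using p1 p2 unfolding Pset_def by auto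
  moreover have "p dvd n" using per_dvd[where p=p and x=x and T=T and k=n] p1 calculation assms(2) by blast
  ultimately show ?thesis using p1 by blast
qed

lemma Pset_fix: "x \<in> Pset T n \<Longrightarrow> (T^^n) x = x" by (simp add: Pset_def)

lemma funpow_map_prod: fixes T :: "'a \<Rightarrow> 'a" and S :: "'b \<Rightarrow> 'b" shows "(map_prod T S ^^ k) (x, y) = ((T^^k) x, (S^^k) y)"
  by (induction k) auto

lemma prod_Pset:
  assumes "0 < n"
  shows "Pset (map_prod T S) n = (\<Union>(a,b)\<in>{(a,b). a dvd n \<and> b dvd n \<and> lcm a b = n}. Pset T a \<times> Pset S b)"
proof -
  have A: "(x,y) \<in> Pset (map_prod T S) (lcm a b)" if "0 < a" "0 < b" "x \<in> Pset T a" "y \<in> Pset S b" for a b x y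
  proof -
    have e: "((map_prod T S)^^k) (x,y) = (x,y) \<longleftrightarrow> lcm a b dvd k" for k
      using per_dvd[OF that(1,3)] per_dvd[OF that(2,4)] by (simp add: funpow_map_prod)
    have nd: "\<not> lcm a b dvd k" if "0 < k" "k < lcm a b" for k using that by (metis dvd_imp_le not_le)
    show ?thesis unfolding Pset_def mem_Collect_eq
    proof (intro conjI allI impI)
      show "(map_prod T S ^^ lcm a b) (x, y) = (x, y)" using e[of "lcm a b"] by simp
      fix k assume "0 < k" "k < lcm a b"
      then show "(map_prod T S ^^ k) (x, y) \<noteq> (x, y)" using e[of k] nd[of k] by simp
    qed
  qed
  show ?thesis
  proof (intro equalityI subsetI)
    fix z assume z: "z \<in> Pset (map_prod T S) n"
    obtain x y where xy: "z = (x,y)" by (cases z)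
    have "(T^^n) x = x" "(S^^n) y = y" using Pset_fix[OF z] xy by (auto simp: funpow_map_prod)
    then obtain a b where ab: "0 < a" "a dvd n" "x \<in> Pset T a" "0 < b" "b dvd n" "y \<in> Pset S b"
      using exists_period[OF assms, of T x] exists_period[OF assms, of S y] by blast
    have P: "(x,y) \<in> Pset (map_prod T S) (lcm a b)" by (rule A[OF ab(1,4,3,6)])
    have lp: "0 < lcm a b" using ab by (simp add: lcm_pos_nat)
    have "lcm a b = n" by (rule Pset_unique[OF lp assms P]) (use z xy in simp)
    then have ab2: "(a,b) \<in> {(a,b). a dvd n \<and> b dvd n \<and> lcm a b = n}" using ab by simp
    show "z \<in> (\<Union>(a,b)\<in>{(a,b). a dvd n \<and> b dvd n \<and> lcm a b = n}. Pset T a \<times> Pset S b)"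
    proof (rule UN_I[where a="(a,b)"])
      show "(a,b) \<in> {(a,b). a dvd n \<and> b dvd n \<and> lcm a b = n}" by (rule ab2)
      show "z \<in> (case (a,b) of (a,b) \<Rightarrow> Pset T a \<times> Pset S b)" using ab xy by simp
    qed
  next
    fix z assume "z \<in> (\<Union>(a,b)\<in>{(a,b). a dvd n \<and> b dvd n \<and> lcm a b = n}. Pset T a \<times> Pset S b)"
    then obtain a b x y where h: "a dvd n" "b dvd n" "lcm a b = n" "x \<in> Pset T a" "y \<in> Pset S b" "z = (x,y)"
      by auto
    have "0 < a" "0 < b" using h assms by (auto intro: Nat.gr0I)
    then show "z \<in> Pset (map_prod T S) n" using A[OF \<open>0 < a\<close> \<open>0 < b\<close> h(4) h(5)] h(3) h(6) by simp
  qed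
qed

definition Q :: "('a \<Rightarrow> 'a) \<Rightarrow> nat \<Rightarrow> int" where "Q T n = int (card (Pset T n))"

lemma finite_Pset: "(\<And>n. n \<ge> 1 \<Longrightarrow> finite {x. (T ^^ n) x = x}) \<Longrightarrow> 0 < n \<Longrightarrow> finite (Pset T n)"
  by (rule finite_subset[of _ "{x. (T ^^ n) x = x}"]) (auto simp: Pset_def)

lemma Q_prod:
  assumes finT: "\<And>n. n \<ge> 1 \<Longrightarrow> finite {x. (T ^^ n) x = x}"
    and finS: "\<And>n. n \<ge> 1 \<Longrightarrow> finite {y. (S ^^ n) y = y}"
    and n: "0 < n"
  shows "Q (map_prod T S) n = H (Q T) (Q S) n"
proof -
  let ?D = "{(a,b). a dvd n \<and> b dvd n \<and> lcm a b = n}"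
  have D: "?D = {x \<in> divs n \<times> divs n. (\<lambda>(a,b). lcm a b = n) x}" by (auto simp: divs_def)
  have finD: "finite ?D" unfolding D using finite_divs[OF n] by simp
  have pos: "0 < a" "0 < b" if "(a,b) \<in> ?D" for a b using that n by (auto intro: Nat.gr0I)
  have "card (Pset (map_prod T S) n) = (\<Sum>(a,b)\<in>?D. card (Pset T a \<times> Pset S b))"
    unfolding prod_Pset[OF n]
  proof (subst card_UN_disjoint)
    show "finite ?D" by (rule finD)
    show "\<forall>i\<in>?D. finite (case i of (a, b) \<Rightarrow> Pset T a \<times> Pset S b)"
    proof
      fix i assume "i \<in> ?D"
      then obtain a b where ab: "i = (a,b)" "(a,b) \<in> ?D" by (cases i) auto
      then have "0 < a" "0 < b" using pos by blast+
      then show "finite (case i of (a, b) \<Rightarrow> Pset T a \<times> Pset S b)"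
        using ab(1) finite_Pset[OF finT] finite_Pset[OF finS] by simp
    qed
    show "\<forall>i\<in>?D. \<forall>j\<in>?D. i \<noteq> j \<longrightarrow> (case i of (a, b) \<Rightarrow> Pset T a \<times> Pset S b) \<inter> (case j of (a, b) \<Rightarrow> Pset T a \<times> Pset S b) = {}"
    proof (intro ballI impI)
      fix i j assume ij: "i \<in> ?D" "j \<in> ?D" "i \<noteq> j"
      obtain a b where i: "i = (a,b)" by (cases i)
      obtain a' b' where j: "j = (a',b')" by (cases j)
      have p: "0 < a" "0 < b" "0 < a'" "0 < b'" using pos ij i j by auto
      show "(case i of (a, b) \<Rightarrow> Pset T a \<times> Pset S b) \<inter> (case j of (a, b) \<Rightarrow> Pset T a \<times> Pset S b) = {}"
      proof (rule ccontr)
        assume "(case i of (a, b) \<Rightarrow> Pset T a \<times> Pset S b) \<inter> (case j of (a, b) \<Rightarrow> Pset T a \<times> Pset S b) \<noteq> {}"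
        then obtain x y where xy: "x \<in> Pset T a" "x \<in> Pset T a'" "y \<in> Pset S b" "y \<in> Pset S b'"
          using i j by auto
        have "a = a'" by (rule Pset_unique[OF p(1) p(3) xy(1) xy(2)])
        moreover have "b = b'" by (rule Pset_unique[OF p(2) p(4) xy(3) xy(4)])
        ultimately show False using ij i j by simp
      qed
    qed
  qed (simp add: split_def)
  also have "\<dots> = (\<Sum>(a,b)\<in>?D. card (Pset T a) * card (Pset S b))"
    by (intro sum.cong refl) (auto simp: card_cartesian_product)
  finally have "Q (map_prod T S) n = (\<Sum>(a,b)\<in>?D. Q T a * Q S b)"
    unfolding Q_def by (simp add: of_nat_sum split_def)
  also have "\<dots> = (\<Sum>(a,b)\<in>divs n \<times> divs n. if lcm a b = n then Q T a * Q S b else 0)"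
    unfolding D
    apply (subst sum.inter_filter)
     apply (simp add: finite_divs n)
    apply (rule sum.cong, rule refl)
    apply (simp add: split_def)
    done
  also have "\<dots> = H (Q T) (Q S) n"
    unfolding H_def by (simp add: sum.cartesian_product)
  finally show ?thesis .
qed

definition orb :: "('a \<Rightarrow> 'a) \<Rightarrow> nat \<Rightarrow> 'a \<Rightarrow> 'a set" where
  "orb T n x = (\<lambda>i. (T^^i) x) ` {..<n}"

lemma funpow_sub: fixes T :: "'a \<Rightarrow> 'a" shows "i \<le> n \<Longrightarrow> (T^^(n-i)) ((T^^i) x) = (T^^n) x"
proof -
  assume "i \<le> n"
  then have "n = (n - i) + i" by simp
  then have "(T^^n) x = (T^^((n - i) + i)) x" by simp
  then show ?thesis by (simp only: funpow_add o_apply)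
qed

lemma funpow_comm: fixes T :: "'a \<Rightarrow> 'a" shows "(T^^a) ((T^^b) x) = (T^^b) ((T^^a) x)"
proof -
  have "(T^^a) ((T^^b) x) = (T^^(a+b)) x" by (simp add: funpow_add)
  also have "\<dots> = (T^^(b+a)) x" by (simp add: add.commute)
  also have "\<dots> = (T^^b) ((T^^a) x)" by (simp add: funpow_add)
  finally show ?thesis .
qed

lemma orb_eq: "{(T ^^ i) x | i. i < n} = orb T n x"
  unfolding orb_def by auto

lemma card_orb: assumes "0 < n" "x \<in> Pset T n" shows "card (orb T n x) = n"
proof -
  have "inj_on (\<lambda>i. (T^^i) x) {..<n}"
  proof (rule inj_onI, rule ccontr)
    fix i j assume h: "i \<in> {..<n}" "j \<in> {..<n}" "(T^^i) x = (T^^j) x" "i \<noteq> j"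
    have key: "False" if "i < j" "j < n" "(T^^i) x = (T^^j) x" for i j
    proof -
      have "(T^^(n - i + j)) x = (T^^(n-i)) ((T^^j) x)" by (simp add: funpow_add)
      also have "\<dots> = (T^^(n-i)) ((T^^i) x)" using that by simp
      also have "\<dots> = (T^^n) x" by (rule funpow_sub) (use that in simp)
      also have "\<dots> = x" using assms by (simp add: Pset_def)
      finally have "n dvd (n - i + j)" using per_dvd[OF assms] by blast
      moreover have "n - i + j = n + (j - i)" using that by simp
      ultimately have "n dvd (j - i)" by (simp add: dvd_add_right_iff)
      moreover have "0 < j - i" "j - i < n" using that by auto
      ultimately show False by (auto dest: dvd_imp_le)
    qed
    show False
    proof (cases "i < j")
      case True then show ?thesis using key h by auto
    next
      case False then have "j < i" using h by auto
      then show ?thesis using key[of j i] h by auto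
    qed
  qed
  then show ?thesis unfolding orb_def by (simp add: card_image)
qed

lemma orb_closed: assumes "(T^^n) x = x" "0 < n" "y \<in> orb T n x" shows "orb T n y \<subseteq> orb T n x"
proof
  fix z assume "z \<in> orb T n y"
  then obtain j where j: "j < n" "z = (T^^j) y" unfolding orb_def by auto
  obtain i where i: "i < n" "y = (T^^i) x" using assms unfolding orb_def by auto
  have "z = (T^^(j+i)) x" using i j by (simp add: funpow_add)
  also have "\<dots> = (T^^((j+i) mod n)) x" using funpow_mod[OF assms(1)] by blast
  finally show "z \<in> orb T n x" unfolding orb_def using assms by auto
qed

lemma closed_orbit_Pset:
  assumes "0 < n" "(T^^n) x = x" "card (orb T n x) = n"
  shows "orb T n x \<subseteq> Pset T n"
proof -
  have xP: "x \<in> Pset T n"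
  proof -
    have "(T^^k) x \<noteq> x" if "0 < k" "k < n" for k
    proof
      assume kx: "(T^^k) x = x"
      have "orb T n x \<subseteq> (\<lambda>i. (T^^i) x) ` {..<k}"
      proof
        fix z assume "z \<in> orb T n x"
        then obtain i where "z = (T^^i) x" unfolding orb_def by auto
        then have "z = (T^^(i mod k)) x" using funpow_mod[OF kx] by simp
        then show "z \<in> (\<lambda>i. (T^^i) x) ` {..<k}" using that by auto
      qed
      then have "card (orb T n x) \<le> card ((\<lambda>i. (T^^i) x) ` {..<k})" by (rule card_mono[rotated]) simp
      also have "\<dots> \<le> k" using card_image_le[of "{..<k}" "\<lambda>i. (T^^i) x"] by simp
      finally show False using assms that by simp
    qed
    then show ?thesis using assms unfolding Pset_def by blast
  qed
  show ?thesis
  proof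
    fix y assume "y \<in> orb T n x"
    then obtain i where i: "i < n" "y = (T^^i) x" unfolding orb_def by auto
    have "(T^^n) y = y" using i assms funpow_comm[where T=T and a=n and b=i and x=x] by simp
    moreover have "(T^^k) y \<noteq> y" if "0 < k" "k < n" for k
    proof
      assume ky: "(T^^k) y = y"
      have "(T^^(n-i)) y = (T^^n) x" unfolding i(2) by (rule funpow_sub) (use i in simp)
      then have yx: "(T^^(n-i)) y = x" using assms by simp
      have "(T^^k) x = (T^^k) ((T^^(n-i)) y)" using yx by simp
      also have "\<dots> = (T^^(n-i)) ((T^^k) y)" by (rule funpow_comm)
      also have "\<dots> = x" using ky yx by simp
      finally show False using xP that unfolding Pset_def by blast
    qed
    ultimately show "y \<in> Pset T n" unfolding Pset_def by blast
  qed
qed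

lemma orbit_count_Q:
  assumes finT: "\<And>n. n \<ge> 1 \<Longrightarrow> finite {x. (T ^^ n) x = x}" and n: "0 < n"
  shows "Q T n = int n * orbit_count T n"
proof -
  let ?C = "closed_orbits T n"
  have C: "?C = {A. \<exists>x. (T^^n) x = x \<and> A = orb T n x \<and> card A = n}"
    unfolding closed_orbits_def orb_eq ..
  have sub: "A \<subseteq> Pset T n" if AC: "A \<in> ?C" for A
  proof -
    obtain x where x: "(T^^n) x = x" "A = orb T n x" "card A = n" using AC unfolding C by blast
    show ?thesis using closed_orbit_Pset[OF n x(1)] x(2,3) by simp
  qed
  have U: "\<Union>?C = Pset T n"
  proof
    show "\<Union>?C \<subseteq> Pset T n" using sub by blast
    show "Pset T n \<subseteq> \<Union>?C"
    proof
      fix x assume x: "x \<in> Pset T n"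
      have "orb T n x \<in> ?C" unfolding C using x card_orb[OF n x] by (auto simp: Pset_def)
      moreover have "x \<in> orb T n x" unfolding orb_def using n by force
      ultimately show "x \<in> \<Union>?C" by blast
    qed
  qed
  have finP: "finite (Pset T n)" using finite_Pset[OF finT n] .
  have "?C \<subseteq> Pow (Pset T n)" using sub by blast
  then have finC: "finite ?C" by (rule finite_subset) (use finP in simp)
  have disj: "pairwise disjnt ?C"
  proof (rule pairwiseI)
    fix A B assume A: "A \<in> ?C" and B: "B \<in> ?C" and ne: "A \<noteq> B"
    have rep: "A = orb T n z" if A: "A \<in> ?C" and z: "z \<in> A" for A z
    proof -
      obtain x where x: "(T^^n) x = x" "A = orb T n x" "card A = n" using A unfolding C by blast
      have zP: "z \<in> Pset T n" using sub[OF A] z by blast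
      have s1: "orb T n z \<subseteq> A" using orb_closed[OF x(1) n] z x(2) by simp
      have s2: "card (orb T n z) = card A" using card_orb[OF n zP] x(3) by simp
      have s3: "finite A" by (rule finite_subset[OF sub[OF A] finP])
      show ?thesis using card_subset_eq[OF s3 s1 s2] by simp
    qed
    show "disjnt A B"
    proof (rule ccontr)
      assume "\<not> disjnt A B"
      then obtain z where zA: "z \<in> A" and zB: "z \<in> B" unfolding disjnt_def by blast
      have "A = B" using rep[OF A zA] rep[OF B zB] by simp
      then show False using ne by simp
    qed
  qed
  have "card (Pset T n) = sum card ?C"
    unfolding U[symmetric]
  proof (rule card_Union_disjoint[OF disj])
    fix A assume "A \<in> ?C"
    then show "finite A" by (rule finite_subset[OF sub finP])
  qed
  also have "\<dots> = sum (\<lambda>_. n) ?C"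
  proof (rule sum.cong[OF refl])
    fix A assume "A \<in> ?C"
    then show "card A = n" unfolding C by blast
  qed
  also have "\<dots> = n * card ?C" by simp
  finally show ?thesis unfolding Q_def orbit_count_def by simp
qed

lemma mult_cong: assumes "\<And>n. 0 < n \<Longrightarrow> F n = G n"
  shows "multiplicative_seq F \<longleftrightarrow> multiplicative_seq G"
  unfolding multiplicative_seq_def using assms by (simp add: assms)

lemma mult_scale: assumes e: "\<And>n. 0 < n \<Longrightarrow> G n = int n * F n"
  shows "multiplicative_seq F \<longleftrightarrow> multiplicative_seq G"
proof
  assume F: "multiplicative_seq F"
  show "multiplicative_seq G" unfolding multiplicative_seq_def
  proof (intro conjI allI impI)
    show "G 1 = 1" using e[of 1] F unfolding multiplicative_seq_def by simp
    fix m n :: nat assume h: "0 < m" "0 < n" "coprime m n"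
    have "G (m*n) = int (m*n) * F (m*n)" using e h by simp
    also have "\<dots> = (int m * F m) * (int n * F n)" using F h unfolding multiplicative_seq_def by simp
    also have "\<dots> = G m * G n" using e h by simp
    finally show "G (m*n) = G m * G n" .
  qed
next
  assume G: "multiplicative_seq G"
  show "multiplicative_seq F" unfolding multiplicative_seq_def
  proof (intro conjI allI impI)
    show "F 1 = 1" using e[of 1] G unfolding multiplicative_seq_def by simp
    fix m n :: nat assume h: "0 < m" "0 < n" "coprime m n"
    have "int (m*n) * F (m*n) = G (m*n)" using e h by simp
    also have "\<dots> = G m * G n" using G h unfolding multiplicative_seq_def by simp
    also have "\<dots> = int (m*n) * (F m * F n)" using e h by simp
    finally show "F (m*n) = F m * F n" using h by simp
  qed
qed

theorem lemma3p1:
  fixes T :: "'a \<Rightarrow> 'a" and S :: "'b \<Rightarrow> 'b"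
  assumes finT: "\<And>n. n \<ge> 1 \<Longrightarrow> finite {x. (T ^^ n) x = x}"
    and finS: "\<And>n. n \<ge> 1 \<Longrightarrow> finite {y. (S ^^ n) y = y}"
  shows "(multiplicative_seq (orbit_count T) \<and> multiplicative_seq (orbit_count S)
            \<longrightarrow> multiplicative_seq (orbit_count (map_prod T S)))
       \<and> (multiplicative_seq (orbit_count T) \<and> multiplicative_seq (orbit_count (map_prod T S))
            \<longrightarrow> multiplicative_seq (orbit_count S))
       \<and> (multiplicative_seq (orbit_count S) \<and> multiplicative_seq (orbit_count (map_prod T S))
            \<longrightarrow> multiplicative_seq (orbit_count T))"
proof -
  have finTS: "finite {z. (map_prod T S ^^ n) z = z}" if "n \<ge> 1" for n
  proof -
    have "{z. (map_prod T S ^^ n) z = z} = {x. (T ^^ n) x = x} \<times> {y. (S ^^ n) y = y}"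
      by (auto simp: funpow_map_prod)
    then show ?thesis using finT[OF that] finS[OF that] by simp
  qed
  have eT: "multiplicative_seq (orbit_count T) \<longleftrightarrow> multiplicative_seq (Q T)"
    by (rule mult_scale) (rule orbit_count_Q[OF finT])
  have eS: "multiplicative_seq (orbit_count S) \<longleftrightarrow> multiplicative_seq (Q S)"
    by (rule mult_scale) (rule orbit_count_Q[OF finS])
  have eTS: "multiplicative_seq (orbit_count (map_prod T S)) \<longleftrightarrow> multiplicative_seq (Q (map_prod T S))"
    by (rule mult_scale) (rule orbit_count_Q[OF finTS])
  have eH: "multiplicative_seq (Q (map_prod T S)) \<longleftrightarrow> multiplicative_seq (H (Q T) (Q S))"
    by (rule mult_cong) (rule Q_prod[OF finT finS])
  have eH': "multiplicative_seq (H (Q T) (Q S)) \<longleftrightarrow> multiplicative_seq (H (Q S) (Q T))"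
    by (rule mult_cong) (rule H_comm)
  have posT: "\<And>n. 0 \<le> Q T n" and posS: "\<And>n. 0 \<le> Q S n" by (simp_all add: Q_def)
  show ?thesis
    using H_mult[of "Q T" "Q S"] H_cancel[of "Q T" "Q S", OF _ posT] H_cancel[of "Q S" "Q T", OF _ posS]
      eT eS eTS eH eH' by blast
qed

end
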